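(* In the setting described in the context, for every vertex $v\in V_L$ of $\mathfrak L_1$ the relation $\sim_v$ is an equivalence relation on $B_L(\Lambda_1,v)$.
   Context: $\mathbb Z_+=\{0,1,2,\dots\}$, $\mathbb N=\{1,2,\dots\}$. A $\lambda$-graph system $\mathfrak L=(V,E,\lambda,\iota)$ over a finite alphabet $\Sigma$ consists of finite nonempty pairwise disjoint vertex sets $V_l$ ($l\in\mathbb Z_+$); finite pairwise disjoint edge sets $E_{l,l+1}$, each $e\in E_{l,l+1}$ having a source $s(e)\in V_l$ and a terminal $t(e)\in V_{l+1}$; a labeling map $\lambda:E\to\Sigma$; and surjections $\iota:V_{l+1}\to V_l$; such that every vertex is the source of some edge, every vertex in $V_l$ ($l\ge1$) is the terminal of some edge, and (local property) for all $l\ge1$, $u\in V_{l-1}$, $v\in V_{l+1}$ there is a label-preserving bijection between $\{e\in E_{l,l+1}: \iota(s(e))=u,\ t(e)=v\}$ and $\{e\in E_{l-1,l}: s(e)=u,\ t(e)=\iota(v)\}$. Left-resolving: $t(e)=t(f)$, $\lambda(e)=\lambda(f)$ imply $e=f$. $\Omega_{\mathfrak L}=\{(u^l)_{l}\in\prod_l V_l: \iota(u^{l+1})=u^l\}$. $E_{\mathfrak L}$ = set of $(u,\alpha,w)\in\Omega_{\mathfrak L}\times\Sigma\times\Omega_{\mathfrak L}$ such that for each $l$ some $e\in E_{l,l+1}$ has $s(e)=u^l$, $t(e)=w^{l+1}$, $\lambda(e)=\alpha$. $X_{\mathfrak L}$ = set of $x=(\alpha_i,u_i)_{i\in\mathbb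 N}$ in $\Sigma\times\Omega_{\mathfrak L}$ with $(u_i,\alpha_{i+1},u_{i+1})\in E_{\mathfrak L}$ for all $i$ and $(u_0,\alpha_1,u_1)\in E_{\mathfrak L}$ for some $u_0$; relative product topology; $\sigma_{\mathfrak L}$ the left shift. For such $x$: $x_{[k,\infty)}=(\alpha_i,u_i)_{i\ge k}$; $\pi_{\mathfrak L}(x)=(\alpha_i)_{i\in\mathbb N}$, $\pi_{\mathfrak L}(x)_{[1,k]}=(\alpha_1,\dots,\alpha_k)$; $v^l_n(x)$ denotes the $l$-th coordinate $u_n^l$ of $u_n$. $X_\Lambda=\pi_{\mathfrak L}(X_{\mathfrak L})$, $B_k(X_\Lambda)$ its words of length $k$. Setting: $\mathfrak L_1,\mathfrak L_2$ are left-resolving $\lambda$-graph systems; write $\pi_i=\pi_{\mathfrak L_i}$, $\Lambda_i$ for the presented subshifts. $\psi_0:X_{\mathfrak L_1}\to X_{\mathfrak L_2}$ is a continuous surjection with $\sigma_{\mathfrak L_2}\circ\psi_0=\psi_0\circ\sigma_{\mathfrak L_1}$, and $1\le l\le L$ are integers such that (a) $\psi_0(x)=\psi_0(x')$ implies $x_{[l,\infty)}=x'_{[l,\infty)}$; (b) there is a map $\Psi:B_L(X_{\Lambda_1})\to B_l(X_{\Lambda_2})$ with $\pi_2(\psi_0(x))_{[1,l]}=\Psi(\pi_1(x)_{[1,L]})$ for all $x\in X_{\mathfrak L_1}$. (This is the situation obtained from an $(\mathfrak L_1,\mathfrak L_2)$-conjugacy of two-sided subshifts.) For $v\in V_L$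 (vertices of $\mathfrak L_1$), $B_L(\Lambda_1,v)$ is the set of $\mu\in B_L(X_{\Lambda_1})$ such that $\mu=\pi_1(x)_{[1,L]}$ for some $x\in X_{\mathfrak L_1}$ with $v^L_L(x)=v$. For $\mu,\mu'\in B_L(\Lambda_1,v)$, $\mu\sim_v\mu'$ means: there exist $x,x'\in X_{\mathfrak L_1}$ with $\pi_1(x)_{[1,L]}=\mu$, $\pi_1(x')_{[1,L]}=\mu'$, $v^L_L(x)=v^L_L(x')=v$ and $\psi_0(x)=\psi_0(x')$. *)

theory Defs
  imports "HOL-Analysis.Analysis"
begin

text \<open>Vertex sets V l; edge set
  E l stands for E_{l,l+1}; src/trg/lab are source, terminal, label; iota is
  the map V_{l+1} -> V_l (one global function, the vertex sets being disjoint).\<close>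

record ('v, 'e, 'a) lgs =
  Sig  :: "'a set"
  V    :: "nat \<Rightarrow> 'v set"
  E    :: "nat \<Rightarrow> 'e set"
  src  :: "'e \<Rightarrow> 'v"
  trg  :: "'e \<Rightarrow> 'v"
  lab  :: "'e \<Rightarrow> 'a"
  iota :: "'v \<Rightarrow> 'v"

definition lambda_graph_system :: "('v, 'e, 'a) lgs \<Rightarrow> bool" where
  "lambda_graph_system L \<longleftrightarrow>
     finite (Sig L) \<and>
     (\<forall>l. finite (V L l) \<and> V L l \<noteq> {}) \<and>
     (\<forall>l m. l \<noteq> m \<longrightarrow> V L l \<inter> V L m = {}) \<and>
     (\<forall>l. finite (E L l)) \<and>
     (\<forall>l m. l \<noteq> m \<longrightarrow> E L l \<inter> E L m = {}) \<and>
     (\<forall>l. \<forall>e\<in>E L l. src L e \<in> V L l \<and> trg L e \<in> V L (Suc l) \<and> lab L e \<in> Sig L) \<and>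
     (\<forall>l. iota L ` V L (Suc l) = V L l) \<and>
     (\<forall>l. \<forall>v\<in>V L l. \<exists>e\<in>E L l. src L e = v) \<and>
     (\<forall>l\<ge>1. \<forall>v\<in>V L l. \<exists>e\<in>E L (l - 1). trg L e = v) \<and>
     (\<forall>l\<ge>1. \<forall>u\<in>V L (l - 1). \<forall>v\<in>V L (Suc l).
        \<exists>f. bij_betw f {e\<in>E L l. iota L (src L e) = u \<and> trg L e = v}
                       {e\<in>E L (l - 1). src L e = u \<and> trg L e = iota L v}
            \<and> (\<forall>e\<in>{e\<in>E L l. iota L (src L e) = u \<and> trg L e = v}. lab L (f e) = lab L e))"

definition left_resolving :: "('v, 'e, 'a) lgs \<Rightarrow> bool" where
  "left_resolving L \<longleftrightarrow>
     (\<forall>l. \<forall>e\<in>E L l. \<forall>f\<in>E L l. trg L e = trg L f \<and> lab L e = lab L f \<longrightarrow> e = f)"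

definition Omega :: "('v, 'e, 'a) lgs \<Rightarrow> (nat \<Rightarrow> 'v) set" where
  "Omega L = {u. (\<forall>l. u l \<in> V L l) \<and> (\<forall>l. iota L (u (Suc l)) = u l)}"

definition EL :: "('v, 'e, 'a) lgs \<Rightarrow> ((nat \<Rightarrow> 'v) \<times> 'a \<times> (nat \<Rightarrow> 'v)) set" where
  "EL L = {(u, \<alpha>, w). u \<in> Omega L \<and> \<alpha> \<in> Sig L \<and> w \<in> Omega L \<and>
              (\<forall>l. \<exists>e\<in>E L l. src L e = u l \<and> trg L e = w (Suc l) \<and> lab L e = \<alpha>)}"

text \<open>Points of X_L.  The paper indexes x = (alpha_i, u_i)_{i>=1}; we shift to
  0-based indexing: x n = (alpha_{n+1}, u_{n+1}).\<close>
definition XL :: "('v, 'e, 'a) lgs \<Rightarrow> (nat \<Rightarrow> 'a \<times> (nat \<Rightarrow> 'v)) set" where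
  "XL L = {x. (\<forall>i. (snd (x i), fst (x (Suc i)), snd (x (Suc i))) \<in> EL L) \<and>
              (\<exists>u0. (u0, fst (x 0), snd (x 0)) \<in> EL L)}"

definition Omega_top :: "('v, 'e, 'a) lgs \<Rightarrow> (nat \<Rightarrow> 'v) topology" where
  "Omega_top L = subtopology (product_topology (\<lambda>l. discrete_topology (V L l)) UNIV) (Omega L)"

definition XL_top :: "('v, 'e, 'a) lgs \<Rightarrow> (nat \<Rightarrow> 'a \<times> (nat \<Rightarrow> 'v)) topology" where
  "XL_top L = subtopology
     (product_topology (\<lambda>i. prod_topology (discrete_topology (Sig L)) (Omega_top L)) UNIV) (XL L)"

definition shift :: "(nat \<Rightarrow> 'b) \<Rightarrow> (nat \<Rightarrow> 'b)" where
  "shift x = (\<lambda>n. x (Suc n))"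

definition word :: "(nat \<Rightarrow> 'a \<times> 'c) \<Rightarrow> nat \<Rightarrow> 'a list" where
  "word x k = map (\<lambda>i. fst (x i)) [0..<k]"

text \<open>v^l_n(x) = l-th coordinate of u_n (n >= 1).\<close>
definition vcoord :: "(nat \<Rightarrow> 'a \<times> (nat \<Rightarrow> 'v)) \<Rightarrow> nat \<Rightarrow> nat \<Rightarrow> 'v" where
  "vcoord x l n = snd (x (n - 1)) l"

definition Bwords :: "('v, 'e, 'a) lgs \<Rightarrow> nat \<Rightarrow> 'a list set" where
  "Bwords L k = {word x k | x. x \<in> XL L}"

definition Bv :: "('v, 'e, 'a) lgs \<Rightarrow> nat \<Rightarrow> 'v \<Rightarrow> 'a list set" where
  "Bv L k v = {word x k | x. x \<in> XL L \<and> vcoord x k k = v}"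

definition simv :: "('v, 'e, 'a) lgs \<Rightarrow> ((nat \<Rightarrow> 'a \<times> (nat \<Rightarrow> 'v)) \<Rightarrow> 'c)
                    \<Rightarrow> nat \<Rightarrow> 'v \<Rightarrow> 'a list \<Rightarrow> 'a list \<Rightarrow> bool" where
  "simv L \<psi> k v \<mu> \<mu>' \<longleftrightarrow>
     (\<exists>x\<in>XL L. \<exists>x'\<in>XL L. word x k = \<mu> \<and> word x' k = \<mu>' \<and>
        vcoord x k k = v \<and> vcoord x' k k = v \<and> \<psi> x = \<psi> x')"

end

theory Submission
  imports Defs
begin

definition sh :: "nat \<Rightarrow> (nat \<Rightarrow> 'b) \<Rightarrow> (nat \<Rightarrow> 'b)" where
  "sh n x = (\<lambda>i. x (i + n))"

lemma XL_iff: "x \<in> XL L \<longleftrightarrow> (\<forall>i. (snd (x i), fst (x (Suc i)), snd (x (Suc i))) \<in> EL L) \<and>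
              (\<exists>u0. (u0, fst (x 0), snd (x 0)) \<in> EL L)"
  by (simp add: XL_def)

lemma XL_pred: "x \<in> XL L \<Longrightarrow> \<exists>w0. (w0, fst (x j), snd (x j)) \<in> EL L"
  unfolding XL_iff by (cases j) auto

lemma sh_XL: "x \<in> XL L \<Longrightarrow> sh n x \<in> XL L"
  unfolding XL_iff sh_def
  using XL_pred[of x L n] by (auto simp: XL_iff)

lemma sh_Suc: "sh (Suc n) x = shift (sh n x)"
  by (auto simp: sh_def shift_def)

lemma psi_sh:
  assumes "\<forall>x\<in>XL L1. \<psi> (shift x) = shift (\<psi> x)" and "x \<in> XL L1"
  shows "\<psi> (sh n x) = sh n (\<psi> x)"
proof (induction n)
  case 0 then show ?case by (simp add: sh_def)
next
  case (Suc n)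
  have "\<psi> (sh (Suc n) x) = shift (\<psi> (sh n x))"
    using assms sh_XL[OF assms(2)] by (simp add: sh_Suc)
  also have "\<dots> = sh (Suc n) (\<psi> x)" using Suc by (simp add: sh_Suc)
  finally show ?case .
qed

lemma EL_edge: "(u, \<alpha>, w) \<in> EL L \<Longrightarrow> \<exists>e\<in>E L l. src L e = u l \<and> trg L e = w (Suc l) \<and> lab L e = \<alpha>"
  by (simp add: EL_def)

lemma EL_Omega: "(u, \<alpha>, w) \<in> EL L \<Longrightarrow> u \<in> Omega L \<and> \<alpha> \<in> Sig L \<and> w \<in> Omega L"
  by (simp add: EL_def)

lemma pred_unique:
  assumes "left_resolving L" "(u, \<alpha>, w) \<in> EL L" "(u', \<alpha>, w) \<in> EL L"
  shows "u = u'"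
proof
  fix l
  obtain e where e: "e \<in> E L l" "src L e = u l" "trg L e = w (Suc l)" "lab L e = \<alpha>"
    using EL_edge[OF assms(2)] by blast
  obtain e' where e': "e' \<in> E L l" "src L e' = u' l" "trg L e' = w (Suc l)" "lab L e' = \<alpha>"
    using EL_edge[OF assms(3)] by blast
  have "e = e'" using assms(1) e e' unfolding left_resolving_def by metis
  then show "u l = u' l" using e e' by simp
qed

lemma Omega_lower:
  assumes "u \<in> Omega L" "u' \<in> Omega L" "u n = u' n" "m \<le> n"
  shows "u m = u' m"
proof -
  have iu: "\<And>k. iota L (u (Suc k)) = u k" and iu': "\<And>k. iota L (u' (Suc k)) = u' k"
    using assms(1,2) unfolding Omega_def by auto
  have "\<forall>n. u n = u' n \<longrightarrow> m \<le> n \<longrightarrow> u m = u' m"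
  proof
    fix n show "u n = u' n \<longrightarrow> m \<le> n \<longrightarrow> u m = u' m"
    proof (induction n)
      case 0 then show ?case by simp
    next
      case (Suc n)
      show ?case
      proof (intro impI)
        assume h: "u (Suc n) = u' (Suc n)" "m \<le> Suc n"
        show "u m = u' m"
        proof (cases "m = Suc n")
          case True then show ?thesis using h by simp
        next
          case False
          have "u n = u' n" using iu[of n] iu'[of n] h(1) by simp
          then show ?thesis using Suc.IH h(2) False by simp
        qed
      qed
    qed
  qed
  then show ?thesis using assms(3,4) by blast
qed

lemma tri:
  assumes lr: "left_resolving L"
    and ca: "\<forall>i. (snd (a i), fst (a (Suc i)), snd (a (Suc i))) \<in> EL L"
    and cb: "\<forall>i. (snd (b i), fst (b (Suc i)), snd (b (Suc i))) \<in> EL L"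
    and lets: "\<forall>i. 0 < i \<and> i \<le> K \<longrightarrow> fst (a i) = fst (b i)"
    and top: "snd (a K) (Suc K) = snd (b K) (Suc K)"
  shows "snd (a 0) 1 = snd (b 0) 1"
proof -
  have "\<forall>d\<le>K. snd (a (K-d)) (Suc (K-d)) = snd (b (K-d)) (Suc (K-d))"
  proof (intro allI impI)
    fix d assume "d \<le> K"
    then show "snd (a (K-d)) (Suc (K-d)) = snd (b (K-d)) (Suc (K-d))"
    proof (induction d)
      case 0 then show ?case using top by simp
    next
      case (Suc d)
      define j where "j = K - Suc d"
      have j1: "Suc j = K - d" using Suc.prems j_def by simp
      have IH: "snd (a (Suc j)) (Suc (Suc j)) = snd (b (Suc j)) (Suc (Suc j))"
        using Suc j1 by simp
      obtain e where e: "e \<in> E L (Suc j)" "src L e = snd (a j) (Suc j)"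
          "trg L e = snd (a (Suc j)) (Suc (Suc j))" "lab L e = fst (a (Suc j))"
        using EL_edge[OF ca[rule_format, of j]] by blast
      obtain e' where e': "e' \<in> E L (Suc j)" "src L e' = snd (b j) (Suc j)"
          "trg L e' = snd (b (Suc j)) (Suc (Suc j))" "lab L e' = fst (b (Suc j))"
        using EL_edge[OF cb[rule_format, of j]] by blast
      have "fst (a (Suc j)) = fst (b (Suc j))" using lets j1 Suc.prems by auto
      then have "e = e'" using lr e e' IH unfolding left_resolving_def by metis
      then show ?case using e e' j_def by simp
    qed
  qed
  then show ?thesis by (metis diff_self_eq_0 order_refl One_nat_def)
qed

lemma lift_pred:
  assumes lg: "lambda_graph_system L" and w: "w \<in> Omega L"
    and e: "e \<in> E L 0" "trg L e = w 1" "lab L e = \<alpha>"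
  shows "\<exists>u. (u, \<alpha>, w) \<in> EL L"
proof -
  have edges: "\<forall>l. \<forall>e\<in>E L l. src L e \<in> V L l \<and> trg L e \<in> V L (Suc l) \<and> lab L e \<in> Sig L"
    using lg unfolding lambda_graph_system_def by blast
  have loc: "\<forall>l\<ge>1. \<forall>u\<in>V L (l - 1). \<forall>v\<in>V L (Suc l).
        \<exists>f. bij_betw f {e\<in>E L l. iota L (src L e) = u \<and> trg L e = v}
                       {e\<in>E L (l - 1). src L e = u \<and> trg L e = iota L v}
            \<and> (\<forall>e\<in>{e\<in>E L l. iota L (src L e) = u \<and> trg L e = v}. lab L (f e) = lab L e)"
    using lg unfolding lambda_graph_system_def by blast
  have wO: "\<forall>l. w l \<in> V L l" "\<forall>l. iota L (w (Suc l)) = w l" using w by (auto simp: Omega_def)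
  define P where "P = (\<lambda>m fm e'. e' \<in> E L (Suc m) \<and> iota L (src L e') = src L fm \<and>
       trg L e' = w (Suc (Suc m)) \<and> lab L e' = \<alpha>)"
  define f where "f = rec_nat e (\<lambda>m fm. SOME e'. P m fm e')"
  have f0: "f 0 = e" by (simp add: f_def)
  have fS: "f (Suc m) = (SOME e'. P m (f m) e')" for m by (simp add: f_def)
  have step: "\<exists>e'. P m fm e'" if fm: "fm \<in> E L m" "trg L fm = w (Suc m)" "lab L fm = \<alpha>" for m fm
  proof -
    have u: "src L fm \<in> V L (Suc m - 1)" using edges fm by simp
    have v: "w (Suc (Suc m)) \<in> V L (Suc (Suc m))" using wO by simp
    obtain g where g: "bij_betw g {e\<in>E L (Suc m). iota L (src L e) = src L fm \<and> trg L e = w (Suc (Suc m))}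
                       {e\<in>E L (Suc m - 1). src L e = src L fm \<and> trg L e = iota L (w (Suc (Suc m)))}"
       and gl: "\<forall>e\<in>{e\<in>E L (Suc m). iota L (src L e) = src L fm \<and> trg L e = w (Suc (Suc m))}. lab L (g e) = lab L e"
      using loc[rule_format, of "Suc m", OF _ u v] by auto
    have "fm \<in> {e\<in>E L (Suc m - 1). src L e = src L fm \<and> trg L e = iota L (w (Suc (Suc m)))}"
      using fm wO by simp
    then obtain e' where e': "e' \<in> {e\<in>E L (Suc m). iota L (src L e) = src L fm \<and> trg L e = w (Suc (Suc m))}"
      "g e' = fm"
      using g unfolding bij_betw_def by (metis (no_types, lifting) imageE)
    then have "lab L e' = \<alpha>" using gl fm by force
    then show ?thesis using e' unfolding P_def by auto
  qed
  have inv: "f m \<in> E L m \<and> trg L (f m) = w (Suc m) \<and> lab L (f m) = \<alpha>" for m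
  proof (induction m)
    case 0 then show ?case using e f0 by simp
  next
    case (Suc m)
    have "P m (f m) (f (Suc m))" unfolding fS using step[of "f m" m] Suc by (metis someI_ex)
    then show ?case unfolding P_def by simp
  qed
  have iot: "iota L (src L (f (Suc m))) = src L (f m)" for m
  proof -
    have "P m (f m) (f (Suc m))" unfolding fS using step[of "f m" m] inv[of m] by (metis someI_ex)
    then show ?thesis unfolding P_def by simp
  qed
  define u where "u = (\<lambda>m. src L (f m))"
  have "u \<in> Omega L" unfolding Omega_def u_def using inv edges iot by auto
  moreover have "\<alpha> \<in> Sig L" using edges e by auto
  ultimately have "(u, \<alpha>, w) \<in> EL L" unfolding EL_def using w inv u_def by auto
  then show ?thesis by blast
qed

lemma word_nth: "n < k \<Longrightarrow> word x k ! n = fst (x n)"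
  by (simp add: word_def)

lemma psi_eq:
  assumes lr2: "left_resolving L2"
    and hsh: "\<forall>x\<in>XL L1. \<psi> (shift x) = shift (\<psi> x)"
    and im: "\<psi> ` XL L1 = XL L2"
    and hP: "\<forall>x\<in>XL L1. word (\<psi> x) l = \<Psi> (word x L)"
    and x: "x \<in> XL L1" and z: "z \<in> XL L1"
    and agree: "\<forall>i\<ge>l - 1. x i = z i"
    and PE: "\<Psi> (word x L) = \<Psi> (word z L)"
    and l1: "1 \<le> l"
  shows "\<psi> x = \<psi> z"
proof -
  have tail: "\<psi> x n = \<psi> z n" if "n \<ge> l - 1" for n
  proof -
    have "sh n x = sh n z" using agree that by (auto simp: sh_def)
    then have "sh n (\<psi> x) = sh n (\<psi> z)" using psi_sh[OF hsh x, of n] psi_sh[OF hsh z, of n] by simp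
    then show ?thesis unfolding sh_def by (metis add_0)
  qed
  have wl: "word (\<psi> x) l = word (\<psi> z) l" using hP x z PE by simp
  have labs: "fst (\<psi> x n) = fst (\<psi> z n)" if "n < l" for n
    using wl word_nth[OF that, of "\<psi> x"] word_nth[OF that, of "\<psi> z"] by simp
  have px: "\<psi> x \<in> XL L2" and pz: "\<psi> z \<in> XL L2" using im x z by auto
  have "\<forall>n. l - 1 \<le> n + k \<longrightarrow> \<psi> x n = \<psi> z n" for k
  proof (induction k)
    case 0 then show ?case using tail by simp
  next
    case (Suc k)
    show ?case
    proof (intro allI impI)
      fix n assume n: "l - 1 \<le> n + Suc k"
      show "\<psi> x n = \<psi> z n"
      proof (cases "l - 1 \<le> n")
        case True then show ?thesis using tail by simp
      next
        case False
        then have nx: "\<psi> x (Suc n) = \<psi> z (Suc n)" using Suc n by simp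
        have e1: "(snd (\<psi> x n), fst (\<psi> x (Suc n)), snd (\<psi> x (Suc n))) \<in> EL L2"
          using px unfolding XL_iff by blast
        have e2: "(snd (\<psi> z n), fst (\<psi> x (Suc n)), snd (\<psi> x (Suc n))) \<in> EL L2"
          using pz nx unfolding XL_iff by metis
        have "snd (\<psi> x n) = snd (\<psi> z n)" using pred_unique[OF lr2 e1 e2] .
        moreover have "fst (\<psi> x n) = fst (\<psi> z n)" using labs False by simp
        ultimately show ?thesis by (simp add: prod_eq_iff)
      qed
    qed
  qed
  then show ?thesis by (metis ext le_add2)
qed

lemma glue:
  assumes lg: "lambda_graph_system L1" and lr: "left_resolving L1"
    and x: "x \<in> XL L1" and y: "y \<in> XL L1" and NL: "N < L"
    and lets: "\<forall>i. N \<le> i \<and> i < L \<longrightarrow> fst (y i) = fst (x i)"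
    and top: "snd (y (L - 1)) L = snd (x (L - 1)) L"
    and dN: "d \<le> N"
  shows "\<exists>p\<in>XL L1. (\<forall>i. p (i + d) = y (i + N)) \<and> (\<forall>i<d. fst (p i) = fst (x (i + N - d)))"
  using dN
proof (induction d)
  case 0
  show ?case using sh_XL[OF y, of N] by (auto simp: sh_def)
next
  case (Suc d)
  then obtain p where p: "p \<in> XL L1" "\<forall>i. p (i + d) = y (i + N)"
      "\<forall>i<d. fst (p i) = fst (x (i + N - d))" by auto
  define j where "j = N - Suc d"
  have jd: "j + Suc d = N" using Suc.prems j_def by simp
  obtain u where u: "(u, fst (p 0), snd (p 0)) \<in> EL L1" using p(1) unfolding XL_iff by blast
  define p' where "p' = case_nat (fst (x j), u) p"
  have p'0: "p' 0 = (fst (x j), u)" and p'S: "\<And>i. p' (Suc i) = p i" by (auto simp: p'_def)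
  have cp: "\<forall>i. (snd (p i), fst (p (Suc i)), snd (p (Suc i))) \<in> EL L1" using p(1) unfolding XL_iff by blast
  have cp': "\<forall>i. (snd (p' i), fst (p' (Suc i)), snd (p' (Suc i))) \<in> EL L1"
  proof
    fix i show "(snd (p' i), fst (p' (Suc i)), snd (p' (Suc i))) \<in> EL L1"
      using u cp p'0 p'S by (cases i) auto
  qed
  define b where "b = sh j x"
  have bX: "b \<in> XL L1" using sh_XL[OF x] b_def by simp
  have cb: "\<forall>i. (snd (b i), fst (b (Suc i)), snd (b (Suc i))) \<in> EL L1" using bX unfolding XL_iff by blast
  have bi: "\<And>i. b i = x (i + j)" by (simp add: b_def sh_def)
  define K where "K = L - 1 - j"
  have K1: "K + j = L - 1" and Kd: "d < K" using NL jd K_def by auto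
  have p'K: "p' K = y (L - 1)"
  proof -
    have "K = Suc ((K - 1 - d) + d)" using Kd by simp
    then have "p' K = p ((K - 1 - d) + d)" using p'S by metis
    also have "\<dots> = y (K - 1 - d + N)" using p(2) by simp
    also have "K - 1 - d + N = L - 1" using K1 jd Kd by simp
    finally show ?thesis .
  qed
  have letsK: "\<forall>i. 0 < i \<and> i \<le> K \<longrightarrow> fst (p' i) = fst (b i)"
  proof (intro allI impI)
    fix i assume i: "0 < i \<and> i \<le> K"
    then obtain i' where i': "i = Suc i'" by (cases i) auto
    show "fst (p' i) = fst (b i)"
    proof (cases "i' < d")
      case True
      then have "fst (p' i) = fst (x (i' + N - d))" using p(3) p'S i' by simp
      also have "i' + N - d = i + j" using i' jd by simp
      finally show ?thesis using bi by simp
    next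
      case False
      have r: "N \<le> i + j" "i + j < L" using False i' jd K1 i NL by auto
      have "p' i = p ((i' - d) + d)" using p'S i' False by simp
      also have "\<dots> = y (i' - d + N)" using p(2) by simp
      also have "i' - d + N = i + j" using False i' jd by simp
      finally have "fst (p' i) = fst (y (i + j))" by simp
      also have "\<dots> = fst (x (i + j))" using lets r by blast
      finally show ?thesis using bi by simp
    qed
  qed
  have yO: "snd (y (L - 1)) \<in> Omega L1" using XL_pred[OF y, of "L - 1"] EL_Omega by metis
  have xO: "snd (x (L - 1)) \<in> Omega L1" using XL_pred[OF x, of "L - 1"] EL_Omega by metis
  have topK: "snd (p' K) (Suc K) = snd (b K) (Suc K)"
  proof -
    have "Suc K \<le> L" using K1 NL by simp
    then have "snd (y (L - 1)) (Suc K) = snd (x (L - 1)) (Suc K)" using Omega_lower[OF yO xO top] by blast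
    moreover have "b K = x (L - 1)" using bi K1 by simp
    ultimately show ?thesis using p'K by simp
  qed
  have "snd (p' 0) 1 = snd (b 0) 1" using tri[OF lr cp' cb letsK topK] .
  then have u1: "u 1 = snd (x j) 1" using p'0 bi by simp
  obtain w0 where "(w0, fst (x j), snd (x j)) \<in> EL L1" using XL_pred[OF x] by blast
  then obtain e where e: "e \<in> E L1 0" "trg L1 e = snd (x j) 1" "lab L1 e = fst (x j)"
    using EL_edge[of w0 "fst (x j)" "snd (x j)" L1 0] by auto
  have uO: "u \<in> Omega L1" using EL_Omega[OF u] by blast
  obtain u0 where "(u0, fst (x j), u) \<in> EL L1" using lift_pred[OF lg uO e(1)] e u1 by auto
  then have p'X: "p' \<in> XL L1" unfolding XL_iff using cp' p'0 by auto
  have A: "\<forall>i. p' (i + Suc d) = y (i + N)" using p'S p(2) by simp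
  have B: "\<forall>i<Suc d. fst (p' i) = fst (x (i + N - Suc d))"
  proof (intro allI impI)
    fix i assume "i < Suc d"
    then show "fst (p' i) = fst (x (i + N - Suc d))"
      using p'0 p'S p(3) jd j_def by (cases i) auto
  qed
  show ?case using p'X A B by blast
qed

theorem lemma7p4:
  fixes L1 :: "('v, 'e, 'a) lgs" and L2 :: "('w, 'f, 'b) lgs"
    and \<psi>0 :: "(nat \<Rightarrow> 'a \<times> (nat \<Rightarrow> 'v)) \<Rightarrow> (nat \<Rightarrow> 'b \<times> (nat \<Rightarrow> 'w))"
    and \<Psi> :: "'a list \<Rightarrow> 'b list"
    and l L :: nat and v :: 'v
  assumes "lambda_graph_system L1" and "left_resolving L1"
    and "lambda_graph_system L2" and "left_resolving L2"
    and "continuous_map (XL_top L1) (XL_top L2) \<psi>0"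
    and "\<psi>0 ` XL L1 = XL L2"
    and "\<forall>x\<in>XL L1. \<psi>0 (shift x) = shift (\<psi>0 x)"
    and "1 \<le> l" and "l \<le> L"
    and "\<forall>x\<in>XL L1. \<forall>x'\<in>XL L1. \<psi>0 x = \<psi>0 x' \<longrightarrow> (\<forall>i\<ge>l - 1. x i = x' i)"
    and "\<forall>\<mu>\<in>Bwords L1 L. \<Psi> \<mu> \<in> Bwords L2 l"
    and "\<forall>x\<in>XL L1. word (\<psi>0 x) l = \<Psi> (word x L)"
    and "v \<in> V L1 L"
  shows "equiv (Bv L1 L v) {(\<mu>, \<mu>'). simv L1 \<psi>0 L v \<mu> \<mu>'}"
proof -
  note a = assms
  let ?R = "{(\<mu>, \<mu>'). simv L1 \<psi>0 L v \<mu> \<mu>'}"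
  have vc: "\<And>x. vcoord x L L = snd (x (L - 1)) L" by (simp add: vcoord_def)
  have sub: "?R \<subseteq> Bv L1 L v \<times> Bv L1 L v"
    unfolding simv_def Bv_def by blast
  have rfl: "\<forall>\<mu>\<in>Bv L1 L v. (\<mu>, \<mu>) \<in> ?R"
    unfolding simv_def Bv_def by blast
  have sym: "\<And>\<mu> \<mu>'. (\<mu>, \<mu>') \<in> ?R \<Longrightarrow> (\<mu>', \<mu>) \<in> ?R"
  proof -
    fix \<mu> \<mu>' assume "(\<mu>, \<mu>') \<in> ?R"
    then obtain x x' where "x \<in> XL L1" "x' \<in> XL L1" "word x L = \<mu>" "word x' L = \<mu>'"
      "vcoord x L L = v" "vcoord x' L L = v" "\<psi>0 x = \<psi>0 x'"
      unfolding simv_def by auto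
    then have "simv L1 \<psi>0 L v \<mu>' \<mu>" unfolding simv_def by metis
    then show "(\<mu>', \<mu>) \<in> ?R" by simp
  qed
  have tr: "(\<mu>, \<mu>'') \<in> ?R" if h1: "(\<mu>, \<mu>') \<in> ?R" and h2: "(\<mu>', \<mu>'') \<in> ?R" for \<mu> \<mu>' \<mu>''
  proof -
    obtain x x' where x: "x \<in> XL L1" "x' \<in> XL L1" "word x L = \<mu>" "word x' L = \<mu>'"
      "vcoord x L L = v" "vcoord x' L L = v" "\<psi>0 x = \<psi>0 x'"
      using h1 unfolding simv_def by auto
    obtain y' y'' where y: "y' \<in> XL L1" "y'' \<in> XL L1" "word y' L = \<mu>'" "word y'' L = \<mu>''"
      "vcoord y' L L = v" "vcoord y'' L L = v" "\<psi>0 y' = \<psi>0 y''"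
      using h2 unfolding simv_def by auto
    have ax: "\<forall>i\<ge>l - 1. x i = x' i" using a(10) x by blast
    have ay: "\<forall>i\<ge>l - 1. y' i = y'' i" using a(10) y by blast
    have P1: "\<Psi> \<mu> = \<Psi> \<mu>'" using a(12) x by metis
    have P2: "\<Psi> \<mu>' = \<Psi> \<mu>''" using a(12) y by metis
    have lets: "\<forall>i. l - 1 \<le> i \<and> i < L \<longrightarrow> fst (y'' i) = fst (x i)"
    proof (intro allI impI)
      fix i assume i: "l - 1 \<le> i \<and> i < L"
      have "fst (y'' i) = fst (y' i)" using ay i by simp
      also have "\<dots> = \<mu>' ! i" using word_nth[of i L y'] i y(3) by simp
      also have "\<dots> = fst (x' i)" using word_nth[of i L x'] i x(4) by simp
      also have "\<dots> = fst (x i)" using ax i by simp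
      finally show "fst (y'' i) = fst (x i)" .
    qed
    have top: "snd (y'' (L - 1)) L = snd (x (L - 1)) L" using x(5) y(6) vc by metis
    have NL: "l - 1 < L" using a(8,9) by simp
    obtain p where p: "p \<in> XL L1" "\<forall>i. p (i + (l - 1)) = y'' (i + (l - 1))"
        "\<forall>i<l - 1. fst (p i) = fst (x (i + (l - 1) - (l - 1)))"
      using glue[OF a(1) a(2) x(1) y(2) NL lets top order_refl] by blast
    have pa: "\<forall>i\<ge>l - 1. p i = y'' i"
    proof (intro allI impI)
      fix i assume "l - 1 \<le> i"
      then have "i = (i - (l - 1)) + (l - 1)" by simp
      then show "p i = y'' i" using p(2) by metis
    qed
    have wp: "word p L = \<mu>"
    proof -
      have "word p L = word x L"
        unfolding word_def
      proof (rule map_cong[OF refl])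
        fix i assume "i \<in> set [0..<L]"
        then have iL: "i < L" by simp
        show "fst (p i) = fst (x i)"
        proof (cases "i < l - 1")
          case True then show ?thesis using p(3) by simp
        next
          case False then show ?thesis using pa lets iL by simp
        qed
      qed
      then show ?thesis using x(3) by simp
    qed
    have vp: "vcoord p L L = v"
    proof -
      have "p (L - 1) = y'' (L - 1)" using pa NL by simp
      then show ?thesis using vc y(6) by metis
    qed
    have "\<psi>0 p = \<psi>0 y''"
      using psi_eq[OF a(4) a(7) a(6) a(12) p(1) y(2) pa _ a(8)] wp y(4) P1 P2 by simp
    then show ?thesis unfolding simv_def using p(1) y(2) wp y(4) vp y(6) by blast
  qed
  show ?thesis
    unfolding equiv_def refl_on_def sym_def trans_def
    using sub rfl sym tr by blast
qed


end
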